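(* There are lattice reduction triples and formulas of mv-ATL*$_\to$ that do not satisfy the translation condition, i.e., for which $[\![\varphi]\!]_{M,\xi}\in f^{-1}(x)$ iff $[\![\varphi]\!]_{f(M),\xi}=x$ fails for some mv-CGS $M$, state or path $\xi$, and value $x$.
   Context: Let $\mathcal{L}=(L,\leq)$ be a finite lattice with meet $\sqcap$, join $\sqcup$, least element $\bot$ and greatest element $\top$; for a family of elements, $\inf$ denotes its greatest lower bound (lattice meet) and $\bigsqcup$ its least upper bound (lattice join). Given a countable set $\mathcal{C}$ of constant symbols, an interpreted lattice is $\mathcal{L}^+=(L,\leq,\sigma)$ with $\sigma:\mathcal{C}\to L$. A multi-valued concurrent game structure (mv-CGS) over $\mathcal{L}^+$ is $M=\langle \mathrm{Agt},Q,Act,d,t,AP,V,\mathcal{L}^+\rangle$ with finite sets of agents, states, actions and atomic propositions, action availability $d$, deterministic transition function $t$, and multi-valued valuation $V:AP\times Q\to L$. Formulas of mv-ATL*$_\to$: state formulas $\varphi::=c\mid p\mid\varphi\wedge\varphi\mid\varphi\vee\varphi\mid\varphi\to\varphi\mid\langle\!\langle A\rangle\!\rangle\gamma\mid[\![A]\!]\gamma$, path formulas $\gamma::=\varphi\mid\gamma\wedge\gamma\mid\gamma\vee\gamma\mid X\gamma\mid\gamma U\gamma\mid\gamma W\gamma$. Semantics: $[\![c]\!]_{M,q}=\sigma(c)$; $[\![p]\!]_{M,q}=V(p,q)$; $\wedge,\vee$ by $\sqcap,\sqcup$; $[\![X\gamma]\!]_{M,\lambda}=[\![\gamma]\!]_{M,\lambda[1..\infty]}$;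 $[\![\gamma_1U\gamma_2]\!]_{M,\lambda}=\bigsqcup_{i\ge 0}\inf_{0\le j<i}\{[\![\gamma_2]\!]_{M,\lambda[i..\infty]}\sqcap[\![\gamma_1]\!]_{M,\lambda[j..\infty]}\}$; $[\![\gamma_1W\gamma_2]\!]_{M,\lambda}=\inf_{i\ge0}[\![\gamma_1]\!]_{M,\lambda[i..\infty]}\sqcup[\![\gamma_1U\gamma_2]\!]_{M,\lambda}$; $[\![\langle\!\langle A\rangle\!\rangle\gamma]\!]_{M,q}=\bigsqcup_{s_A\in\Sigma_A}\inf_{\lambda\in out(q,s_A)}[\![\gamma]\!]_{M,\lambda}$; $[\![[\![A]\!]\gamma]\!]_{M,q}=\inf_{s_A}\bigsqcup_{\lambda\in out(q,s_A)}[\![\gamma]\!]_{M,\lambda}$; $[\![\varphi_1\to\varphi_2]\!]_{M,q}=\top$ if $[\![\varphi_1]\!]_{M,q}\le[\![\varphi_2]\!]_{M,q}$ and $\bot$ otherwise. A lattice reduction triple (LRT) is $(\mathcal{L},\mathcal{L}_f,f)$ where $\mathcal{L}_f=(L_f,\leq_f)$ is a sublattice of $\mathcal{L}$ and $f:L\to L_f$ preserves arbitrary bounds: $f(\inf_{i\in I}x_i)=\inf_{i\in I}f(x_i)$ and $f(\bigsqcup_{i\in I}x_i)=\bigsqcup_{i\in I}f(x_i)$. The image $f(M)$ of an mv-CGS $M$ has the same components except valuation $V_f(p,q)=f(V(p,q))$ and interpreted lattice $(L_f,\leq_f,\sigma_f)$ with $\sigma_f(c)=f(\sigma(c))$. A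 formula $\varphi$ satisfies the translation condition if for every state (resp. path) $\xi$: $[\![\varphi]\!]_{M,\xi}\in f^{-1}(x)$ iff $[\![\varphi]\!]_{f(M),\xi}=x$. *)

theory Defs
  imports Main
begin

text \<open>Lattice elements, states, agents, actions, atomic propositions and constant
symbols are all represented by natural numbers (every finite lattice / finite set
is isomorphic to one carried by a subset of nat).\<close>

definition is_glb :: "nat set \<Rightarrow> (nat \<Rightarrow> nat \<Rightarrow> bool) \<Rightarrow> nat set \<Rightarrow> nat \<Rightarrow> bool" where
  "is_glb A le X x \<longleftrightarrow> x \<in> A \<and> (\<forall>y\<in>X. le x y) \<and> (\<forall>z\<in>A. (\<forall>y\<in>X. le z y) \<longrightarrow> le z x)"

definition is_lub :: "nat set \<Rightarrow> (nat \<Rightarrow> nat \<Rightarrow> bool) \<Rightarrow> nat set \<Rightarrow> nat \<Rightarrow> bool" where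
  "is_lub A le X x \<longleftrightarrow> x \<in> A \<and> (\<forall>y\<in>X. le y x) \<and> (\<forall>z\<in>A. (\<forall>y\<in>X. le y z) \<longrightarrow> le x z)"

definition glb :: "nat set \<Rightarrow> (nat \<Rightarrow> nat \<Rightarrow> bool) \<Rightarrow> nat set \<Rightarrow> nat" where
  "glb A le X = (THE x. is_glb A le X x)"

definition lub :: "nat set \<Rightarrow> (nat \<Rightarrow> nat \<Rightarrow> bool) \<Rightarrow> nat set \<Rightarrow> nat" where
  "lub A le X = (THE x. is_lub A le X x)"

definition fin_lattice :: "nat set \<Rightarrow> (nat \<Rightarrow> nat \<Rightarrow> bool) \<Rightarrow> bool" where
  "fin_lattice A le \<longleftrightarrow> finite A \<and> A \<noteq> {}
     \<and> (\<forall>x\<in>A. le x x)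
     \<and> (\<forall>x\<in>A. \<forall>y\<in>A. le x y \<and> le y x \<longrightarrow> x = y)
     \<and> (\<forall>x\<in>A. \<forall>y\<in>A. \<forall>z\<in>A. le x y \<and> le y z \<longrightarrow> le x z)
     \<and> (\<forall>x\<in>A. \<forall>y\<in>A. (\<exists>m. is_glb A le {x, y} m) \<and> (\<exists>j. is_lub A le {x, y} j))"

definition restr :: "nat set \<Rightarrow> (nat \<Rightarrow> nat \<Rightarrow> bool) \<Rightarrow> nat \<Rightarrow> nat \<Rightarrow> bool" where
  "restr B le x y \<longleftrightarrow> x \<in> B \<and> y \<in> B \<and> le x y"

definition sublattice :: "nat set \<Rightarrow> (nat \<Rightarrow> nat \<Rightarrow> bool) \<Rightarrow> nat set \<Rightarrow> bool" where
  "sublattice A le B \<longleftrightarrow> B \<subseteq> A \<and> B \<noteq> {}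
     \<and> (\<forall>x\<in>B. \<forall>y\<in>B. glb A le {x, y} \<in> B \<and> lub A le {x, y} \<in> B)"

text \<open>Since L is finite,
an arbitrary family of elements of L is just a subset of L.\<close>
definition lrt :: "nat set \<Rightarrow> (nat \<Rightarrow> nat \<Rightarrow> bool) \<Rightarrow> nat set \<Rightarrow> (nat \<Rightarrow> nat) \<Rightarrow> bool" where
  "lrt L le Lf f \<longleftrightarrow> fin_lattice L le \<and> sublattice L le Lf
     \<and> (\<forall>x\<in>L. f x \<in> Lf)
     \<and> (\<forall>X. X \<subseteq> L \<longrightarrow> f (glb L le X) = glb Lf (restr Lf le) (f ` X))
     \<and> (\<forall>X. X \<subseteq> L \<longrightarrow> f (lub L le X) = lub Lf (restr Lf le) (f ` X))"

record mvcgs =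
  agt :: "nat set"
  st :: "nat set"
  act :: "nat set"
  avail :: "nat \<Rightarrow> nat \<Rightarrow> nat set"
  trans :: "nat \<Rightarrow> (nat \<Rightarrow> nat) \<Rightarrow> nat"
  aps :: "nat set"
  val :: "nat \<Rightarrow> nat \<Rightarrow> nat"
  lat :: "nat set"
  leq :: "nat \<Rightarrow> nat \<Rightarrow> bool"
  interp :: "nat \<Rightarrow> nat"

definition is_mvcgs :: "mvcgs \<Rightarrow> bool" where
  "is_mvcgs M \<longleftrightarrow> finite (agt M) \<and> finite (st M) \<and> st M \<noteq> {} \<and> finite (act M) \<and> finite (aps M)
     \<and> (\<forall>a\<in>agt M. \<forall>q\<in>st M. avail M a q \<subseteq> act M \<and> avail M a q \<noteq> {})
     \<and> (\<forall>q\<in>st M. \<forall>\<alpha>. (\<forall>a\<in>agt M. \<alpha> a \<in> avail M a q) \<longrightarrow> trans M q \<alpha> \<in> st M)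
     \<and> (\<forall>q \<alpha> \<beta>. (\<forall>a\<in>agt M. \<alpha> a = \<beta> a) \<longrightarrow> trans M q \<alpha> = trans M q \<beta>)
     \<and> fin_lattice (lat M) (leq M)
     \<and> (\<forall>p\<in>aps M. \<forall>q\<in>st M. val M p q \<in> lat M)
     \<and> (\<forall>c. interp M c \<in> lat M)"

definition meet :: "mvcgs \<Rightarrow> nat \<Rightarrow> nat \<Rightarrow> nat" where
  "meet M x y = glb (lat M) (leq M) {x, y}"
definition join :: "mvcgs \<Rightarrow> nat \<Rightarrow> nat \<Rightarrow> nat" where
  "join M x y = lub (lat M) (leq M) {x, y}"
definition Inf_M :: "mvcgs \<Rightarrow> nat set \<Rightarrow> nat" where
  "Inf_M M X = glb (lat M) (leq M) X"
definition Sup_M :: "mvcgs \<Rightarrow> nat set \<Rightarrow> nat" where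
  "Sup_M M X = lub (lat M) (leq M) X"
definition ltop :: "mvcgs \<Rightarrow> nat" where
  "ltop M = Inf_M M {}"
definition lbot :: "mvcgs \<Rightarrow> nat" where
  "lbot M = Sup_M M {}"

definition legal :: "mvcgs \<Rightarrow> nat \<Rightarrow> (nat \<Rightarrow> nat) \<Rightarrow> bool" where
  "legal M q \<alpha> \<longleftrightarrow> (\<forall>a\<in>agt M. \<alpha> a \<in> avail M a q)"

definition is_path :: "mvcgs \<Rightarrow> (nat \<Rightarrow> nat) \<Rightarrow> bool" where
  "is_path M l \<longleftrightarrow> (\<forall>i. l i \<in> st M) \<and> (\<forall>i. \<exists>\<alpha>. legal M (l i) \<alpha> \<and> l (Suc i) = trans M (l i) \<alpha>)"

definition suffix :: "(nat \<Rightarrow> nat) \<Rightarrow> nat \<Rightarrow> nat \<Rightarrow> nat" where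
  "suffix l i = (\<lambda>n. l (n + i))"

definition prefix :: "(nat \<Rightarrow> nat) \<Rightarrow> nat \<Rightarrow> nat list" where
  "prefix l i = map l [0..<Suc i]"

definition strategy :: "mvcgs \<Rightarrow> nat set \<Rightarrow> (nat \<Rightarrow> nat list \<Rightarrow> nat) \<Rightarrow> bool" where
  "strategy M A s \<longleftrightarrow> (\<forall>a\<in>A. \<forall>h. h \<noteq> [] \<and> set h \<subseteq> st M \<longrightarrow> s a h \<in> avail M a (last h))"

definition out :: "mvcgs \<Rightarrow> nat \<Rightarrow> nat set \<Rightarrow> (nat \<Rightarrow> nat list \<Rightarrow> nat) \<Rightarrow> (nat \<Rightarrow> nat) set" where
  "out M q A s = {l. l 0 = q \<and> (\<forall>i. \<exists>\<alpha>. legal M (l i) \<alpha>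
        \<and> (\<forall>a\<in>A. \<alpha> a = s a (prefix l i)) \<and> l (Suc i) = trans M (l i) \<alpha>)}"

datatype sform =
    Const nat
  | Prop nat
  | SAnd sform sform
  | SOr sform sform
  | Imp sform sform
  | Coal "nat set" pform
  | CoCoal "nat set" pform
and pform =
    St sform
  | PAnd pform pform
  | POr pform pform
  | Next pform
  | Until pform pform
  | WUntil pform pform

definition until_val :: "mvcgs \<Rightarrow> (nat \<Rightarrow> nat) \<Rightarrow> (nat \<Rightarrow> nat) \<Rightarrow> nat" where
  "until_val M v1 v2 = Sup_M M {meet M (v2 i) (Inf_M M {v1 j | j. j < i}) | i. True}"

primrec sem_s :: "mvcgs \<Rightarrow> nat \<Rightarrow> sform \<Rightarrow> nat"
  and sem_p :: "mvcgs \<Rightarrow> (nat \<Rightarrow> nat) \<Rightarrow> pform \<Rightarrow> nat" where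
  "sem_s M q (Const c) = interp M c"
| "sem_s M q (Prop p) = val M p q"
| "sem_s M q (SAnd a b) = meet M (sem_s M q a) (sem_s M q b)"
| "sem_s M q (SOr a b) = join M (sem_s M q a) (sem_s M q b)"
| "sem_s M q (Imp a b) = (if leq M (sem_s M q a) (sem_s M q b) then ltop M else lbot M)"
| "sem_s M q (Coal A g) =
     Sup_M M {Inf_M M {sem_p M l g | l. l \<in> out M q A s} | s. strategy M A s}"
| "sem_s M q (CoCoal A g) =
     Inf_M M {Sup_M M {sem_p M l g | l. l \<in> out M q A s} | s. strategy M A s}"
| "sem_p M l (St f) = sem_s M (l 0) f"
| "sem_p M l (PAnd a b) = meet M (sem_p M l a) (sem_p M l b)"
| "sem_p M l (POr a b) = join M (sem_p M l a) (sem_p M l b)"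
| "sem_p M l (Next g) = sem_p M (suffix l 1) g"
| "sem_p M l (Until g1 g2) =
     until_val M (\<lambda>i. sem_p M (suffix l i) g1) (\<lambda>i. sem_p M (suffix l i) g2)"
| "sem_p M l (WUntil g1 g2) =
     join M (Inf_M M {sem_p M (suffix l i) g1 | i. True})
            (until_val M (\<lambda>i. sem_p M (suffix l i) g1) (\<lambda>i. sem_p M (suffix l i) g2))"

primrec wf_s :: "mvcgs \<Rightarrow> sform \<Rightarrow> bool"
  and wf_p :: "mvcgs \<Rightarrow> pform \<Rightarrow> bool" where
  "wf_s M (Const c) = True"
| "wf_s M (Prop p) = (p \<in> aps M)"
| "wf_s M (SAnd a b) = (wf_s M a \<and> wf_s M b)"
| "wf_s M (SOr a b) = (wf_s M a \<and> wf_s M b)"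
| "wf_s M (Imp a b) = (wf_s M a \<and> wf_s M b)"
| "wf_s M (Coal A g) = (A \<subseteq> agt M \<and> wf_p M g)"
| "wf_s M (CoCoal A g) = (A \<subseteq> agt M \<and> wf_p M g)"
| "wf_p M (St f) = wf_s M f"
| "wf_p M (PAnd a b) = (wf_p M a \<and> wf_p M b)"
| "wf_p M (POr a b) = (wf_p M a \<and> wf_p M b)"
| "wf_p M (Next g) = wf_p M g"
| "wf_p M (Until a b) = (wf_p M a \<and> wf_p M b)"
| "wf_p M (WUntil a b) = (wf_p M a \<and> wf_p M b)"

definition fimg :: "(nat \<Rightarrow> nat) \<Rightarrow> nat set \<Rightarrow> mvcgs \<Rightarrow> mvcgs" where
  "fimg f Lf M = M\<lparr>val := (\<lambda>p q. f (val M p q)), lat := Lf, leq := restr Lf (leq M),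
                    interp := (\<lambda>c. f (interp M c))\<rparr>"

end

theory Submission
  imports Defs
begin

lemma glb_chain:
  assumes A: "finite A" and X: "X \<subseteq> A" "X \<noteq> {}"
    and le: "\<forall>x\<in>A. \<forall>y\<in>A. le x y = (x \<le> y)"
  shows "glb A le X = Min X"
proof -
  have fX: "finite X" using A X finite_subset by blast
  have MX: "Min X \<in> A" using X fX Min_in by blast
  have g: "is_glb A le X (Min X)"
    unfolding is_glb_def using MX le X fX by (auto intro: Min_le Min_ge_iff[THEN iffD2])
  have u: "\<And>x. is_glb A le X x \<Longrightarrow> x = Min X"
  proof -
    fix x assume h: "is_glb A le X x"
    then have "x \<in> A" "\<forall>y\<in>X. le x y" "le (Min X) x" using g MX unfolding is_glb_def by auto
    then show "x = Min X" using g le MX X fX unfolding is_glb_def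
      by (metis Min_in antisym subsetD)
  qed
  show ?thesis unfolding glb_def using g u by (rule the_equality)
qed

lemma lub_chain:
  assumes A: "finite A" and X: "X \<subseteq> A" "X \<noteq> {}"
    and le: "\<forall>x\<in>A. \<forall>y\<in>A. le x y = (x \<le> y)"
  shows "lub A le X = Max X"
proof -
  have fX: "finite X" using A X finite_subset by blast
  have MX: "Max X \<in> A" using X fX Max_in by blast
  have g: "is_lub A le X (Max X)"
    unfolding is_lub_def using MX le X fX by (auto intro: Max_ge Max_le_iff[THEN iffD2])
  have u: "\<And>x. is_lub A le X x \<Longrightarrow> x = Max X"
  proof -
    fix x assume h: "is_lub A le X x"
    then have "x \<in> A" "\<forall>y\<in>X. le y x" "le x (Max X)" using g MX unfolding is_lub_def by auto
    then show "x = Max X" using g le MX X fX unfolding is_lub_def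
      by (metis Max_in antisym subsetD)
  qed
  show ?thesis unfolding lub_def using g u by (rule the_equality)
qed

lemma glb_empty:
  assumes A: "finite A" "A \<noteq> {}"
    and le: "\<forall>x\<in>A. \<forall>y\<in>A. le x y = (x \<le> y)"
  shows "glb A le {} = Max A"
proof -
  have g: "is_glb A le {} (Max A)" unfolding is_glb_def using A le by auto
  have u: "\<And>x. is_glb A le {} x \<Longrightarrow> x = Max A"
  proof -
    fix x assume "is_glb A le {} x"
    then have "x \<in> A" "le (Max A) x" using A unfolding is_glb_def by auto
    then show "x = Max A" using A le by (metis Max_ge Max_in antisym)
  qed
  show ?thesis unfolding glb_def using g u by (rule the_equality)
qed

lemma lub_empty:
  assumes A: "finite A" "A \<noteq> {}"
    and le: "\<forall>x\<in>A. \<forall>y\<in>A. le x y = (x \<le> y)"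
  shows "lub A le {} = Min A"
proof -
  have g: "is_lub A le {} (Min A)" unfolding is_lub_def using A le by auto
  have u: "\<And>x. is_lub A le {} x \<Longrightarrow> x = Min A"
  proof -
    fix x assume "is_lub A le {} x"
    then have "x \<in> A" "le x (Min A)" using A unfolding is_lub_def by auto
    then show "x = Min A" using A le by (metis Min_le Min_in antisym)
  qed
  show ?thesis unfolding lub_def using g u by (rule the_equality)
qed

definition LL :: "nat set" where "LL = {0,1,2}"
definition LF :: "nat set" where "LF = {0,2}"
definition ff :: "nat \<Rightarrow> nat" where "ff x = (if x = 0 then 0 else 2)"

lemma ff_mono: "mono ff" unfolding mono_def ff_def by auto

lemma le_LL: "\<forall>x\<in>LL. \<forall>y\<in>LL. (\<le>) x y = (x \<le> y)" by simp
lemma le_LF: "\<forall>x\<in>LF. \<forall>y\<in>LF. restr LF (\<le>) x y = (x \<le> y)" unfolding restr_def by simp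

lemma fin_LL: "fin_lattice LL (\<le>)"
  unfolding fin_lattice_def
proof (intro conjI ballI)
  fix x y assume "x \<in> LL" "y \<in> LL"
  then have s: "{x,y} \<subseteq> LL" by auto
  have f: "finite LL" unfolding LL_def by simp
  show "\<exists>m. is_glb LL (\<le>) {x, y} m" using s f unfolding is_glb_def
      by (rule_tac x="min x y" in exI) (auto simp: min_def)
next
  fix x y assume "x \<in> LL" "y \<in> LL"
  then have s: "{x,y} \<subseteq> LL" by auto
  have f: "finite LL" unfolding LL_def by simp
    show "\<exists>j. is_lub LL (\<le>) {x, y} j" using s f unfolding is_lub_def
      by (rule_tac x="max x y" in exI) (auto simp: max_def)
qed (auto simp: LL_def)

lemma lrt_ok: "lrt LL (\<le>) LF ff"
  unfolding lrt_def
proof (intro conjI allI impI ballI)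
  show "fin_lattice LL (\<le>)" by (rule fin_LL)
  show "sublattice LL (\<le>) LF"
    unfolding sublattice_def
  proof (intro conjI ballI)
    fix x y assume "x \<in> LF" "y \<in> LF"
    then have s: "{x,y} \<subseteq> LL" "{x,y} \<subseteq> LF" by (auto simp: LL_def LF_def)
    show "glb LL (\<le>) {x, y} \<in> LF"
      using glb_chain[OF _ s(1) _ le_LL] s(2) Min_in[of "{x,y}"] by (auto simp: LL_def)
    show "lub LL (\<le>) {x, y} \<in> LF"
      using lub_chain[OF _ s(1) _ le_LL] s(2) Max_in[of "{x,y}"] by (auto simp: LL_def)
  qed (auto simp: LL_def LF_def)
  fix x assume "x \<in> LL" then show "ff x \<in> LF" by (auto simp: ff_def LF_def)
next
  fix X assume X: "X \<subseteq> LL"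
  have fl: "finite LL" "LL \<noteq> {}" "finite LF" "LF \<noteq> {}" by (auto simp: LL_def LF_def)
  have fX: "ff ` X \<subseteq> LF" by (auto simp: ff_def LF_def)
  show "ff (glb LL (\<le>) X) = glb LF (restr LF (\<le>)) (ff ` X)"
  proof (cases "X = {}")
    case True
    then show ?thesis using glb_empty[OF fl(1,2) le_LL] glb_empty[OF fl(3,4) le_LF]
      by (simp add: LL_def LF_def ff_def)
  next
    case False
    have "finite X" using X fl finite_subset by blast
    then show ?thesis using glb_chain[OF fl(1) X False le_LL] glb_chain[OF fl(3) fX _ le_LF] False
      mono_Min_commute[OF ff_mono] by simp
  qed
next
  fix X assume X: "X \<subseteq> LL"
  have fl: "finite LL" "LL \<noteq> {}" "finite LF" "LF \<noteq> {}" by (auto simp: LL_def LF_def)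
  have fX: "ff ` X \<subseteq> LF" by (auto simp: ff_def LF_def)
  show "ff (lub LL (\<le>) X) = lub LF (restr LF (\<le>)) (ff ` X)"
  proof (cases "X = {}")
    case True
    then show ?thesis using lub_empty[OF fl(1,2) le_LL] lub_empty[OF fl(3,4) le_LF]
      by (simp add: LL_def LF_def ff_def)
  next
    case False
    have "finite X" using X fl finite_subset by blast
    then show ?thesis using lub_chain[OF fl(1) X False le_LL] lub_chain[OF fl(3) fX _ le_LF] False
      mono_Max_commute[OF ff_mono] by simp
  qed
qed

definition MM :: mvcgs where
  "MM = \<lparr>agt = {0}, st = {0}, act = {0}, avail = (\<lambda>_ _. {0}), trans = (\<lambda>_ _. 0),
         aps = {}, val = (\<lambda>_ _. 0), lat = LL, leq = (\<le>),
         interp = (\<lambda>c. if c = 0 then 2 else 1)\<rparr>"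

lemma MM_ok: "is_mvcgs MM"
  unfolding is_mvcgs_def MM_def using fin_LL by (auto simp: LL_def)

theorem proposition5p8:
  shows "\<exists>L le Lf f. lrt L le Lf f \<and>
    (\<exists>M. is_mvcgs M \<and> lat M = L \<and> leq M = le \<and>
      ((\<exists>\<phi> q x. wf_s M \<phi> \<and> q \<in> st M \<and> x \<in> Lf \<and>
          \<not> (sem_s M q \<phi> \<in> {y \<in> L. f y = x} \<longleftrightarrow> sem_s (fimg f Lf M) q \<phi> = x))
     \<or> (\<exists>\<gamma> l x. wf_p M \<gamma> \<and> is_path M l \<and> x \<in> Lf \<and>
          \<not> (sem_p M l \<gamma> \<in> {y \<in> L. f y = x} \<longleftrightarrow> sem_p (fimg f Lf M) l \<gamma> = x))))"
proof -
  have fl: "finite LL" "LL \<noteq> {}" "finite LF" "LF \<noteq> {}" by (auto simp: LL_def LF_def)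
  have s1: "sem_s MM 0 (Imp (Const 0) (Const 1)) = 0"
    using lub_empty[OF fl(1,2) le_LL]
    by (simp add: MM_def lbot_def Sup_M_def LL_def)
  have s2: "sem_s (fimg ff LF MM) 0 (Imp (Const 0) (Const 1)) = 2"
  proof -
    have g: "glb LF (restr LF (\<le>)) {} = 2" using glb_empty[OF fl(3,4) le_LF] by (simp add: LF_def)
    have r: "restr LF (\<le>) 2 2" by (simp add: restr_def LF_def)
    show ?thesis using g r by (simp add: MM_def fimg_def ltop_def Inf_M_def ff_def)
  qed
  show ?thesis
    apply (rule exI[of _ LL], rule exI[of _ "(\<le>)"], rule exI[of _ LF], rule exI[of _ ff])
    apply (rule conjI[OF lrt_ok])
    apply (rule exI[of _ MM])
    apply (intro conjI MM_ok)
      apply (simp add: MM_def)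
     apply (simp add: MM_def)
    apply (rule disjI1)
    apply (rule exI[of _ "Imp (Const 0) (Const 1)"], rule exI[of _ 0], rule exI[of _ 0])
    using s1 s2 by (simp add: MM_def LF_def LL_def ff_def)
qed

end
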